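(* Let $d\ge2$ and let $L_1,\dots,L_k\subset\mathbb R^d$ be linear subspaces with $\dim L_i\ge2$, $A_i=L_i^\perp$, and assume $L_i\cap L_j\ne\{0\}$ for all $1\le i,j\le k$. Let $\mathcal G_i=\{U\in SO(d): U|_{A_i}=\mathrm{Id}_{A_i}\}$ and let $\mathcal G\subset SO(d)$ be the subgroup generated by $\mathcal G_1,\dots,\mathcal G_k$. Then $\mathcal G$ acts transitively on the unit sphere $\mathbb S^{d-1}$ if and only if $\operatorname{span}\{L_1,\dots,L_k\}=\mathbb R^d$, which in turn is equivalent to $\bigcap_{i=1}^k A_i=\{0\}$. *)

theory Defs
  imports "HOL-Analysis.Analysis"
begin

definition SO :: "(real^'n^'n) set" where
  "SO = {U. orthogonal_matrix U \<and> det U = 1}"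

definition fixing_group :: "(real^'n) set \<Rightarrow> (real^'n^'n) set" where
  "fixing_group A = {U \<in> SO. \<forall>a\<in>A. U *v a = a}"

definition generated_subgroup :: "(real^'n^'n) set \<Rightarrow> (real^'n^'n) set" where
  "generated_subgroup S = {U. \<forall>H. H \<subseteq> SO \<and> mat 1 \<in> H \<and> (\<forall>X\<in>H. \<forall>Y\<in>H. X ** Y \<in> H)
      \<and> (\<forall>X\<in>H. matrix_inv X \<in> H) \<and> S \<subseteq> H \<longrightarrow> U \<in> H}"

definition transitive_on_sphere :: "(real^'n^'n) set \<Rightarrow> bool" where
  "transitive_on_sphere G = (\<forall>x y. norm x = 1 \<and> norm y = 1 \<longrightarrow> (\<exists>U\<in>G. U *v x = y))"

end

theory Submission
  imports Defs
begin

definition isgrp :: "(real^'n^'n) set \<Rightarrow> bool" where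
  "isgrp H \<longleftrightarrow> H \<subseteq> SO \<and> mat 1 \<in> H \<and> (\<forall>X\<in>H. \<forall>Y\<in>H. X ** Y \<in> H) \<and> (\<forall>X\<in>H. matrix_inv X \<in> H)"

lemma orth_matrix_inv:
  fixes U :: "real^'n^'n"
  assumes "orthogonal_matrix U"
  shows "matrix_inv U = transpose U"
proof -
  have t: "U ** transpose U = mat 1 \<and> transpose U ** U = mat 1"
    using assms by (simp add: orthogonal_matrix_def)
  show ?thesis unfolding matrix_inv_def
  proof (rule some_equality)
    fix A assume A: "U ** A = mat 1 \<and> A ** U = mat 1"
    have "A = (transpose U ** U) ** A" using t by simp
    also have "\<dots> = transpose U ** (U ** A)" by (simp add: matrix_mul_assoc)
    also have "\<dots> = transpose U" using A by simp
    finally show "A = transpose U" .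
  qed (use t in auto)
qed

lemma SO_mul: "X \<in> SO \<Longrightarrow> Y \<in> SO \<Longrightarrow> X ** Y \<in> SO"
  by (auto simp: SO_def orthogonal_matrix_mul det_mul)

lemma SO_inv: "X \<in> SO \<Longrightarrow> matrix_inv X \<in> SO"
  by (auto simp: SO_def orth_matrix_inv)

lemma SO_id: "mat 1 \<in> SO"
  by (simp add: SO_def orthogonal_matrix_id det_I)

lemma isgrp_SO: "isgrp SO"
  by (auto simp: isgrp_def SO_mul SO_inv SO_id)

lemma gen_least: "isgrp H \<Longrightarrow> S \<subseteq> H \<Longrightarrow> generated_subgroup S \<subseteq> H"
  unfolding generated_subgroup_def isgrp_def by blast

lemma gen_base: "S \<subseteq> generated_subgroup S"
  unfolding generated_subgroup_def by blast

lemma gen_isgrp: fixes S :: "(real^'n^'n) set" assumes "S \<subseteq> SO" shows "isgrp (generated_subgroup S)"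
proof -
  have 1: "generated_subgroup S \<subseteq> SO" using gen_least[OF isgrp_SO assms] .
  have 2: "mat 1 \<in> generated_subgroup S"
    unfolding generated_subgroup_def by blast
  have 3: "X ** Y \<in> generated_subgroup S" if "X \<in> generated_subgroup S" "Y \<in> generated_subgroup S" for X Y
    using that unfolding generated_subgroup_def mem_Collect_eq
  proof (intro allI impI)
    fix H :: "(real^'n^'n) set"
    assume X: "\<forall>H. H \<subseteq> SO \<and> mat 1 \<in> H \<and> (\<forall>X\<in>H. \<forall>Y\<in>H. X ** Y \<in> H) \<and> (\<forall>X\<in>H. matrix_inv X \<in> H) \<and> S \<subseteq> H \<longrightarrow> X \<in> H"
      and Y: "\<forall>H. H \<subseteq> SO \<and> mat 1 \<in> H \<and> (\<forall>X\<in>H. \<forall>Y\<in>H. X ** Y \<in> H) \<and> (\<forall>X\<in>H. matrix_inv X \<in> H) \<and> S \<subseteq> H \<longrightarrow> Y \<in> H"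
      and H: "H \<subseteq> SO \<and> mat 1 \<in> H \<and> (\<forall>X\<in>H. \<forall>Y\<in>H. X ** Y \<in> H) \<and> (\<forall>X\<in>H. matrix_inv X \<in> H) \<and> S \<subseteq> H"
    have "X \<in> H" using X H by (elim allE impE)
    moreover have "Y \<in> H" using Y H by (elim allE impE)
    ultimately show "X ** Y \<in> H" using H by blast
  qed
  have 4: "matrix_inv X \<in> generated_subgroup S" if "X \<in> generated_subgroup S" for X
    using that unfolding generated_subgroup_def mem_Collect_eq
  proof (intro allI impI)
    fix H :: "(real^'n^'n) set"
    assume X: "\<forall>H. H \<subseteq> SO \<and> mat 1 \<in> H \<and> (\<forall>X\<in>H. \<forall>Y\<in>H. X ** Y \<in> H) \<and> (\<forall>X\<in>H. matrix_inv X \<in> H) \<and> S \<subseteq> H \<longrightarrow> X \<in> H"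
      and H: "H \<subseteq> SO \<and> mat 1 \<in> H \<and> (\<forall>X\<in>H. \<forall>Y\<in>H. X ** Y \<in> H) \<and> (\<forall>X\<in>H. matrix_inv X \<in> H) \<and> S \<subseteq> H"
    have "X \<in> H" using X H by (elim allE impE)
    then show "matrix_inv X \<in> H" using H by blast
  qed
  show ?thesis unfolding isgrp_def using 1 2 3 4 by blast
qed

lemma SO_orth: "U \<in> SO \<Longrightarrow> orthogonal_matrix U" by (simp add: SO_def)

lemma orth_tr_mv: "orthogonal_matrix U \<Longrightarrow> transpose U *v (U *v x) = x"
  by (simp add: matrix_vector_mul_assoc orthogonal_matrix_def)

lemma orth_mv_tr: "orthogonal_matrix U \<Longrightarrow> U *v (transpose U *v x) = x"
  by (simp add: matrix_vector_mul_assoc orthogonal_matrix_def)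

lemma orth_mv_vm: fixes U :: "real^'n^'n" assumes "orthogonal_matrix U" shows "U *v (x v* U) = x"
  using orth_mv_tr[OF assms, of x] by (simp only: transpose_matrix_vector)

lemma vm_comp: fixes Q :: "real^'n^'n" shows "(x v* Q) $ k = x \<bullet> (Q *v axis k 1)"
  by (simp only: cart_eq_inner_axis dot_lmul_matrix)

lemma det_sq: fixes Q :: "real^'n^'n" assumes "orthogonal_matrix Q" shows "det Q * det Q = 1"
proof -
  have "det (Q ** transpose Q) = 1"
    using assms by (simp add: orthogonal_matrix_def det_I)
  then show ?thesis by (simp only: det_mul det_transpose)
qed

lemma reflection_exists:
  fixes q :: "real^'n"
  assumes "norm q = 1"
  obtains R where "orthogonal_matrix R" "det R = -1" "\<And>x. R *v x = x - (2 * (x \<bullet> q)) *\<^sub>R q"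
proof -
  obtain k :: 'n where True by simp
  obtain Q where Q: "orthogonal_matrix Q" "Q *v axis k 1 = q"
    by (rule orthogonal_matrix_exists_basis[OF assms])
  define d :: "'n \<Rightarrow> real" where "d i = (if i = k then -1 else 1)" for i
  define D :: "real^'n^'n" where "D = (\<chi> i j. if j = i then d i else 0)"
  have Dc: "(D *v y) $ i = d i * y $ i" for y i
  proof -
    have "(D *v y) $ i = (\<Sum>j\<in>UNIV. (if j = i then d i else 0) * y $ j)"
      by (simp add: D_def matrix_vector_mult_def)
    also have "\<dots> = (\<Sum>j\<in>UNIV. if j = i then d i * y $ j else 0)"
      by (rule sum.cong) auto
    also have "\<dots> = d i * y $ i" by (simp add: sum.delta)
    finally show ?thesis .
  qed
  have Dv: "D *v y = y - (2 * y $ k) *\<^sub>R axis k 1" for y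
    by (simp add: vec_eq_iff Dc d_def axis_def)
  have detD: "det D = -1"
  proof -
    have "det D = prod (\<lambda>i. D$i$i) UNIV" by (rule det_diagonal) (simp add: D_def)
    also have "\<dots> = prod d UNIV" by (simp add: D_def)
    also have "\<dots> = -1" by (simp add: d_def prod.If_cases)
    finally show ?thesis .
  qed
  have DD: "D ** D = mat 1"
  proof -
    have "(D ** D) *v y = mat 1 *v y" for y
      by (simp add: matrix_vector_mul_assoc[symmetric] vec_eq_iff Dc d_def)
    then show ?thesis by (metis matrix_eq)
  qed
  have tD: "transpose D = D"
    by (simp add: D_def transpose_def vec_eq_iff)
  have oD: "orthogonal_matrix D"
    unfolding orthogonal_matrix_def tD DD by simp
  define R where "R = Q ** D ** transpose Q"
  show thesis
  proof
    have o1: "orthogonal_matrix (Q ** D)" by (rule orthogonal_matrix_mul[OF Q(1) oD])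
    have o2: "orthogonal_matrix (transpose Q)" using Q(1) by simp
    show "orthogonal_matrix R" unfolding R_def by (rule orthogonal_matrix_mul[OF o1 o2])
    have h: "det Q * det Q = 1" by (rule det_sq[OF Q(1)])
    have "det R = det Q * det D * det Q" by (simp add: R_def det_mul)
    also have "\<dots> = - (det Q * det Q)" by (simp add: detD)
    finally show "det R = -1" using h by simp
    fix x
    have "R *v x = Q *v (D *v (transpose Q *v x))"
      by (simp only: R_def matrix_vector_mul_assoc matrix_mul_assoc)
    also have "\<dots> = Q *v (transpose Q *v x) - (2 * (x \<bullet> q)) *\<^sub>R (Q *v axis k 1)"
      by (simp add: Dv vm_comp Q matrix_vector_mult_diff_distrib matrix_vector_mult_scaleR)
    also have "\<dots> = x - (2 * (x \<bullet> q)) *\<^sub>R q"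
      by (simp add: orth_mv_tr orth_mv_vm Q)
    finally show "R *v x = x - (2 * (x \<bullet> q)) *\<^sub>R q" .
  qed
qed

lemma rot_in_subspace:
  fixes L :: "(real^'n) set" and y y' :: "real^'n"
  assumes L: "subspace L" "dim L \<ge> 2" and ny: "norm y = norm y'" and dL: "y - y' \<in> L"
  obtains U where "U \<in> SO" "\<And>v. v \<in> orthogonal_comp L \<Longrightarrow> U *v v = v" "U *v y = y'"
proof (cases "y = y'")
  case True
  show thesis by (rule that[of "mat 1"]) (auto simp: SO_id True)
next
  case False
  define d where "d = y - y'"
  have d0: "d \<noteq> 0" using False by (simp add: d_def)
  define q1 where "q1 = d /\<^sub>R norm d"
  have nq1: "norm q1 = 1" using d0 by (simp add: q1_def)
  obtain R1 where R1: "orthogonal_matrix R1" "det R1 = -1" "\<And>x. R1 *v x = x - (2 * (x \<bullet> q1)) *\<^sub>R q1"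
    using reflection_exists[OF nq1] by blast
  have yy: "y' \<bullet> y' = y \<bullet> y" using ny by (metis power2_norm_eq_inner)
  have dd: "d \<bullet> d = 2 * (y \<bullet> d)"
    using yy by (simp add: d_def inner_diff_left inner_diff_right inner_commute)
  have nd2: "norm d * norm d = d \<bullet> d" by (metis power2_norm_eq_inner power2_eq_square)
  have R1y: "R1 *v y = y'"
  proof -
    have "(2 * (y \<bullet> q1)) *\<^sub>R q1 = ((2 * (y \<bullet> d)) / (norm d * norm d)) *\<^sub>R d"
      by (simp add: q1_def field_simps)
    also have "\<dots> = d"
    proof -
      have nz: "norm d * norm d \<noteq> 0" using d0 by simp
      have "(2 * (y \<bullet> d)) / (norm d * norm d) = 1" using nd2 dd nz by simp
      then show ?thesis by (metis scaleR_one)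
    qed
    finally show ?thesis using R1(3) by (simp add: d_def)
  qed
  have sL: "span L = L" using L(1) by (simp add: span_eq_iff)
  obtain p z where p: "p \<in> span L" and z: "\<And>w. w \<in> span L \<Longrightarrow> orthogonal z w" and yp: "y' = p + z"
    using orthogonal_subspace_decomp_exists[of L y'] by blast
  have "span {p} \<subset> span L"
  proof
    show "span {p} \<subseteq> span L" using p by (simp add: span_minimal subspace_span)
    show "span {p} \<noteq> span L"
    proof
      assume "span {p} = span L"
      then have "dim L = dim {p}" by (metis dim_span)
      also have "\<dots> \<le> 1" using dim_le_card'[of "{p}"] by simp
      finally show False using L(2) by simp
    qed
  qed
  then obtain f where f0: "f \<noteq> 0" and fL: "f \<in> span L" and fp: "\<And>w. w \<in> span {p} \<Longrightarrow> orthogonal f w"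
    using orthogonal_to_subspace_exists_gen[of "{p}" L] by blast
  have "orthogonal f p" using fp by (simp add: span_base)
  moreover have "orthogonal z f" using z fL by blast
  ultimately have fy: "y' \<bullet> f = 0"
    by (simp add: yp orthogonal_def inner_add_left inner_add_right inner_commute)
  define q2 where "q2 = f /\<^sub>R norm f"
  have nq2: "norm q2 = 1" using f0 by (simp add: q2_def)
  obtain R2 where R2: "orthogonal_matrix R2" "det R2 = -1" "\<And>x. R2 *v x = x - (2 * (x \<bullet> q2)) *\<^sub>R q2"
    using reflection_exists[OF nq2] by blast
  have R2y: "R2 *v y' = y'" using fy by (simp add: R2(3) q2_def)
  show thesis
  proof (rule that[of "R2 ** R1"])
    show "R2 ** R1 \<in> SO" using R1 R2 by (simp add: SO_def orthogonal_matrix_mul det_mul)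
    show "(R2 ** R1) *v y = y'" by (simp add: matrix_vector_mul_assoc[symmetric] R1y R2y)
    fix v assume v: "v \<in> orthogonal_comp L"
    have "d \<in> L" using dL by (simp add: d_def)
    then have "v \<bullet> d = 0" using v by (simp add: orthogonal_comp_def orthogonal_def inner_commute)
    then have v1: "R1 *v v = v" by (simp add: R1(3) q1_def)
    have "f \<in> L" using fL sL by simp
    then have "v \<bullet> f = 0" using v by (simp add: orthogonal_comp_def orthogonal_def inner_commute)
    then have v2: "R2 *v v = v" by (simp add: R2(3) q2_def)
    show "(R2 ** R1) *v v = v" by (simp add: matrix_vector_mul_assoc[symmetric] v1 v2)
  qed
qed

definition reach :: "(real^'n^'n) set \<Rightarrow> (real^'n) set \<Rightarrow> real^'n \<Rightarrow> real^'n \<Rightarrow> bool" where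
  "reach G S y y' \<longleftrightarrow> (\<exists>U\<in>G. (\<forall>v\<in>orthogonal_comp S. U *v v = v) \<and> U *v y = y')"

definition good :: "(real^'n^'n) set \<Rightarrow> (real^'n) set \<Rightarrow> bool" where
  "good G S \<longleftrightarrow> (\<forall>y y'. norm y = norm y' \<longrightarrow> y - y' \<in> S \<longrightarrow> reach G S y y')"

lemma reach_refl: "isgrp G \<Longrightarrow> reach G S y y"
  unfolding reach_def isgrp_def by (rule bexI[of _ "mat 1"]) auto

lemma reach_sym:
  assumes G: "isgrp G" and r: "reach G S y y'"
  shows "reach G S y' y"
proof -
  obtain U where U: "U \<in> G" "\<And>v. v \<in> orthogonal_comp S \<Longrightarrow> U *v v = v" "U *v y = y'"
    using r unfolding reach_def by blast
  have oU: "orthogonal_matrix U" using U(1) G by (auto simp: isgrp_def SO_def)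
  have inv: "matrix_inv U = transpose U" by (rule orth_matrix_inv[OF oU])
  have "transpose U \<in> G" using U(1) G inv unfolding isgrp_def by metis
  moreover have "transpose U *v v = v" if "v \<in> orthogonal_comp S" for v
    using orth_tr_mv[OF oU, of v] U(2)[OF that] by simp
  moreover have "transpose U *v y' = y"
    using orth_tr_mv[OF oU, of y] U(3) by simp
  ultimately show ?thesis unfolding reach_def by blast
qed

lemma reach_trans:
  assumes G: "isgrp G" and r1: "reach G S x y" and r2: "reach G S y z"
  shows "reach G S x z"
proof -
  obtain U where U: "U \<in> G" "\<And>v. v \<in> orthogonal_comp S \<Longrightarrow> U *v v = v" "U *v x = y"
    using r1 unfolding reach_def by blast
  obtain V where V: "V \<in> G" "\<And>v. v \<in> orthogonal_comp S \<Longrightarrow> V *v v = v" "V *v y = z"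
    using r2 unfolding reach_def by blast
  have "V ** U \<in> G" using U(1) V(1) G unfolding isgrp_def by blast
  moreover have "(V ** U) *v v = v" if "v \<in> orthogonal_comp S" for v
    using U(2)[OF that] V(2)[OF that] by (simp add: matrix_vector_mul_assoc[symmetric])
  moreover have "(V ** U) *v x = z"
    using U(3) V(3) by (simp add: matrix_vector_mul_assoc[symmetric])
  ultimately show ?thesis unfolding reach_def by blast
qed

lemma reach_mono:
  assumes "S \<subseteq> T" "reach G S y y'"
  shows "reach G T y y'"
  using assms orthogonal_comp_anti_mono[OF assms(1)] unfolding reach_def by blast

lemma reach_lin:
  assumes r: "reach G S y y'" and g: "g \<in> orthogonal_comp S"
  shows "reach G S (c *\<^sub>R y + g) (c *\<^sub>R y' + g)"
proof -
  obtain U where U: "U \<in> G" "\<And>v. v \<in> orthogonal_comp S \<Longrightarrow> U *v v = v" "U *v y = y'"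
    using r unfolding reach_def by blast
  have "U *v (c *\<^sub>R y + g) = c *\<^sub>R y' + g"
    using U(2)[OF g] U(3) by (simp add: matrix_vector_right_distrib matrix_vector_mult_scaleR)
  then show ?thesis using U unfolding reach_def by blast
qed

lemma good_base:
  fixes L :: "(real^'n) set"
  assumes "subspace L" "dim L \<ge> 2" "fixing_group (orthogonal_comp L) \<subseteq> G"
  shows "good G L"
  unfolding good_def
proof (intro allI impI)
  fix y y' :: "real^'n"
  assume "norm y = norm y'" "y - y' \<in> L"
  then obtain U where U: "U \<in> SO" "\<And>v. v \<in> orthogonal_comp L \<Longrightarrow> U *v v = v" "U *v y = y'"
    using rot_in_subspace[OF assms(1,2)] by metis
  have "U \<in> fixing_group (orthogonal_comp L)"
    using U unfolding fixing_group_def by blast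
  then show "reach G L y y'" using U assms(3) unfolding reach_def by blast
qed

lemma coord_aux:
  fixes c s x w :: real
  assumes cs: "c^2 + s^2 = 1" and s: "s > 0" and h: "x^2 - 2*c*x* w + w^2 \<le> s^2"
  shows "x^2 + ((c*x - w)/s)^2 \<le> 1"
proof -
  have e1: "s^2 * ((c*x - w)/s)^2 = (c*x - w)^2" using s by (simp add: power_divide)
  have e2: "s^2*x^2 + (c*x - w)^2 = (c^2 + s^2)*x^2 - 2*c*x* w + w^2"
    by (simp add: power2_eq_square algebra_simps)
  have "s^2 * (x^2 + ((c*x - w)/s)^2) = x^2 - 2*c*x* w + w^2"
    using e1 e2 cs by (simp add: distrib_left)
  also have "\<dots> \<le> s^2 * 1" using h by simp
  finally show ?thesis using s by (simp add: mult_le_cancel_left_pos)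
qed

lemma step_alg:
  fixes c s x :: real
  assumes cs: "c^2 + s^2 = 1" and x: "\<bar>x\<bar> \<le> 1"
  shows "x^2 - 2*c*x*(c*x) + (c*x)^2 \<le> s^2" "(c*x)^2 - 2*c*(c*x)*x + x^2 \<le> s^2"
proof -
  have x2: "x^2 \<le> 1" using x abs_le_square_iff[of x 1] by simp
  have "x^2 - 2*c*x*(c*x) + (c*x)^2 = (1 - c^2) * x^2"
    by (simp add: power2_eq_square algebra_simps)
  also have "\<dots> = s^2 * x^2" using cs by simp
  also have "\<dots> \<le> s^2" using x2 by (simp add: mult_left_le)
  finally show "x^2 - 2*c*x*(c*x) + (c*x)^2 \<le> s^2" .
  then show "(c*x)^2 - 2*c*(c*x)*x + x^2 \<le> s^2" by (simp add: algebra_simps)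
qed

lemma unit_inner:
  fixes x :: "'a::real_inner" assumes "x \<noteq> 0" shows "(x /\<^sub>R norm x) \<bullet> (x /\<^sub>R norm x) = 1"
proof -
  have "norm (x /\<^sub>R norm x) = 1" using assms by simp
  then show ?thesis by (simp only: norm_eq_1)
qed

lemma unit_perp_exists:
  fixes W :: "(real^'n) set" and e1 :: "real^'n"
  assumes sW: "subspace W" and dW: "dim W \<ge> 2" and e1W: "e1 \<in> W"
  obtains u where "u \<in> W" "u \<bullet> u = 1" "u \<bullet> e1 = 0"
proof -
  have spW: "span W = W" using sW by (simp add: span_eq_iff)
  have "span {e1} \<subset> span W"
  proof
    show "span {e1} \<subseteq> span W" using e1W by (intro span_mono) simp
    show "span {e1} \<noteq> span W"
    proof
      assume "span {e1} = span W"
      then have "dim W = dim {e1}" by (metis dim_span)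
      also have "\<dots> \<le> 1" using dim_le_card'[of "{e1}"] by simp
      finally show False using dW by simp
    qed
  qed
  then obtain f where f0: "f \<noteq> 0" and fW: "f \<in> span W" and fp: "\<And>w. w \<in> span {e1} \<Longrightarrow> orthogonal f w"
    using orthogonal_to_subspace_exists_gen[of "{e1}" W] by blast
  have fe: "f \<bullet> e1 = 0" using fp[of e1] by (simp add: span_base orthogonal_def)
  show thesis
  proof (rule that[of "f /\<^sub>R norm f"])
    show "f /\<^sub>R norm f \<in> W" using fW spW sW by (simp add: subspace_scale)
    have n1: "norm (f /\<^sub>R norm f) = 1" using f0 by simp
    show "(f /\<^sub>R norm f) \<bullet> (f /\<^sub>R norm f) = 1" using n1 by (simp only: norm_eq_1)
    show "(f /\<^sub>R norm f) \<bullet> e1 = 0" using fe by simp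
  qed
qed

lemma good_step:
  fixes W L :: "(real^'n) set" and e :: "real^'n"
  assumes G: "isgrp G" and sW: "subspace W" and sL: "subspace L"
    and gW: "good G W" and gL: "good G L"
    and eW: "e \<in> W" and eL: "e \<in> L" and e0: "e \<noteq> 0" and dW: "dim W \<ge> 2"
  shows "good G (span (W \<union> L))"
proof -
  define W' where "W' = span (W \<union> L)"
  have WW': "W \<subseteq> W'" "L \<subseteq> W'" unfolding W'_def using span_superset[of "W \<union> L"] by auto
  have sW': "subspace W'" unfolding W'_def by (rule subspace_span)
  have spW: "span W = W" using sW by (simp add: span_eq_iff)
  have spL: "span L = L" using sL by (simp add: span_eq_iff)
  have goodW: "reach G W' y y'" if "norm y = norm y'" "y - y' \<in> W" for y y'
    using gW that reach_mono[OF WW'(1)] unfolding good_def by blast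
  have goodL: "reach G W' y y'" if "norm y = norm y'" "y - y' \<in> L" for y y'
    using gL that reach_mono[OF WW'(2)] unfolding good_def by blast
  define e1 where "e1 = e /\<^sub>R norm e"
  have e1W: "e1 \<in> W" using eW sW by (simp add: e1_def subspace_scale)
  have e1L: "e1 \<in> L" using eL sL by (simp add: e1_def subspace_scale)
  have ne1: "norm e1 = 1" using e0 by (simp add: e1_def)
  have e1e1: "e1 \<bullet> e1 = 1" using ne1 by (simp add: norm_eq_1)
  have C1: "reach G W' h e1" if hW': "h \<in> W'" and nh: "norm h = 1" for h
  proof -
    obtain p q where p: "p \<in> span W" and q: "\<And>w. w \<in> span W \<Longrightarrow> orthogonal q w" and hpq: "h = p + q"
      using orthogonal_subspace_decomp_exists[of W h] by blast
    have pW: "p \<in> W" using p spW by simp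
    have qW: "q \<bullet> w = 0" if "w \<in> W" for w using q[of w] that spW by (simp add: orthogonal_def)
    show ?thesis
    proof (cases "q = 0")
      case True
      then have "h \<in> W" using hpq pW by simp
      then have "h - e1 \<in> W" using e1W sW by (simp add: subspace_diff)
      then show ?thesis using goodW[of h e1] nh ne1 by simp
    next
      case False
      define t where "t = norm q"
      have t0: "t > 0" using False by (simp add: t_def)
      define nn where "nn = q /\<^sub>R t"
      have qnn: "q = t *\<^sub>R nn" using t0 by (simp add: nn_def)
      have nn1: "nn \<bullet> nn = 1" using unit_inner[OF False] by (simp add: nn_def t_def)
      have nnW: "nn \<bullet> w = 0" if "w \<in> W" for w using qW[OF that] by (simp add: nn_def)
      have qW': "q \<in> W'"
      proof -
        have "q = h - p" using hpq by simp
        then show ?thesis using hW' WW'(1) pW sW' by (metis subsetD subspace_diff)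
      qed
      have nnW': "nn \<in> W'" using qW' sW' by (simp add: nn_def subspace_scale)
      obtain w l where wW: "w \<in> W" and lL: "l \<in> L" and nwl: "nn = w + l"
        using nnW' spW spL unfolding W'_def span_Un by blast
      define l0 where "l0 = l - (l \<bullet> e1) *\<^sub>R e1"
      define w0 where "w0 = l0 - nn"
      have l0L: "l0 \<in> L" using lL e1L sL by (simp add: l0_def subspace_diff subspace_scale)
      have w0eq: "w0 = - ((l \<bullet> e1) *\<^sub>R e1) - w" by (simp add: w0_def l0_def nwl)
      have w0W: "w0 \<in> W" using e1W wW sW unfolding w0eq by (simp add: subspace_diff subspace_neg subspace_scale)
      have l0e: "l0 \<bullet> e1 = 0" using e1e1 by (simp add: l0_def inner_diff_left)
      have nne: "nn \<bullet> e1 = 0" using nnW[OF e1W] .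
      have w0e: "w0 \<bullet> e1 = 0" using l0e nne by (simp add: w0_def inner_diff_left)
      obtain u where uW: "u \<in> W" and uu: "u \<bullet> u = 1" and ue: "u \<bullet> e1 = 0" and w0u: "w0 = norm w0 *\<^sub>R u"
      proof (cases "w0 = 0")
        case True
        obtain u where "u \<in> W" "u \<bullet> u = 1" "u \<bullet> e1 = 0"
          using unit_perp_exists[OF sW dW e1W] by blast
        then show thesis using that[of u] True by simp
      next
        case False
        show thesis
        proof (rule that[of "w0 /\<^sub>R norm w0"])
          show "w0 /\<^sub>R norm w0 \<in> W" using w0W sW by (simp add: subspace_scale)
          show "(w0 /\<^sub>R norm w0) \<bullet> (w0 /\<^sub>R norm w0) = 1" using unit_inner[OF False] .
          show "(w0 /\<^sub>R norm w0) \<bullet> e1 = 0" using w0e by simp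
          show "w0 = norm w0 *\<^sub>R (w0 /\<^sub>R norm w0)" using False by simp
        qed
      qed
      have unn: "u \<bullet> nn = 0" using nnW[OF uW] by (simp add: inner_commute)
      have e1u: "e1 \<bullet> u = 0" using ue by (simp add: inner_commute)
      have e1nn: "e1 \<bullet> nn = 0" using nne by (simp add: inner_commute)
      have nnu: "nn \<bullet> u = 0" using unn by (simp add: inner_commute)
      define r where "r = norm w0"
      define N where "N = sqrt (1 + r^2)"
      define c where "c = r / N"
      define s where "s = 1 / N"
      have N0: "N > 0" unfolding N_def by (simp add: add_pos_nonneg)
      have N2: "N^2 = 1 + r^2" unfolding N_def by (simp add: add_nonneg_nonneg)
      have cs: "c^2 + s^2 = 1"
      proof -
        have p: "1 + r^2 > 0" by (simp add: add_pos_nonneg)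
        have "c^2 + s^2 = (r^2 + 1) / N^2" by (simp add: c_def s_def power_divide add_divide_distrib)
        also have "\<dots> = 1" using N2 p by simp
        finally show ?thesis .
      qed
      have s0: "s > 0" using N0 by (simp add: s_def)
      have c0: "c \<ge> 0" using N0 by (simp add: c_def r_def)
      have c1: "c < 1"
      proof (rule ccontr)
        assume "\<not> c < 1"
        then have "1 \<le> c^2" by (simp add: one_le_power)
        moreover have "s^2 > 0" using s0 by simp
        ultimately show False using cs by linarith
      qed
      have cN: "c * N = r" "s * N = 1" using N0 by (simp_all add: c_def s_def)
      have l0eq: "l0 = r *\<^sub>R u + nn" using w0u by (simp add: w0_def r_def algebra_simps)
      define pt where "pt a b z = a *\<^sub>R e1 + b *\<^sub>R u + z *\<^sub>R nn" for a b z
      have ptn: "pt a b z \<bullet> pt a b z = a^2 + b^2 + z^2" for a b z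
        by (simp add: pt_def inner_add_left inner_add_right e1e1 uu nn1 ue nne unn e1u e1nn nnu power2_eq_square)
      have ptnorm: "norm (pt a b z) = norm (pt a' b' z')" if "a^2+b^2+z^2 = a'^2+b'^2+z'^2" for a b z a' b' z'
        using ptn[of a b z] ptn[of a' b' z'] that by (simp add: norm_eq_sqrt_inner)
      have mv1: "reach G W' (pt a b z) (pt a' b' z)" if "a^2 + b^2 = a'^2 + b'^2" for a b z a' b'
      proof (rule goodW)
        show "norm (pt a b z) = norm (pt a' b' z)" using that by (intro ptnorm) simp
        have "pt a b z - pt a' b' z = (a - a') *\<^sub>R e1 + (b - b') *\<^sub>R u" by (simp add: pt_def algebra_simps)
        moreover have "(a - a') *\<^sub>R e1 + (b - b') *\<^sub>R u \<in> W" using e1W uW sW by (simp add: subspace_add subspace_scale)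
        ultimately show "pt a b z - pt a' b' z \<in> W" by simp
      qed
      have mv2: "reach G W' (pt a b z) (pt a' b' z')"
        if "c*z - s*b = c*z' - s*b'" "a^2+b^2+z^2 = a'^2+b'^2+z'^2" for a b z a' b' z'
      proof (rule goodL)
        show "norm (pt a b z) = norm (pt a' b' z')" using that(2) by (rule ptnorm)
        have e1: "(c*z - s*b) * N = (c*N)*z - (s*N)*b" by (simp add: algebra_simps)
        have e2: "(c*z' - s*b') * N = (c*N)*z' - (s*N)*b'" by (simp add: algebra_simps)
        have "(c*z - s*b) * N = (c*z' - s*b') * N" using that(1) by simp
        then have "r*z - b = r*z' - b'" using e1 e2 cN by simp
        then have bb: "b - b' = r * (z - z')" by (simp add: algebra_simps)
        have "pt a b z - pt a' b' z' = (a - a') *\<^sub>R e1 + (b - b') *\<^sub>R u + (z - z') *\<^sub>R nn"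
          by (simp add: pt_def algebra_simps)
        also have "\<dots> = (a - a') *\<^sub>R e1 + (z - z') *\<^sub>R l0"
          by (simp only: bb) (simp add: l0eq algebra_simps)
        finally have "pt a b z - pt a' b' z' = (a - a') *\<^sub>R e1 + (z - z') *\<^sub>R l0" .
        moreover have "(a - a') *\<^sub>R e1 + (z - z') *\<^sub>R l0 \<in> L" using e1L l0L sL by (simp add: subspace_add subspace_scale)
        ultimately show "pt a b z - pt a' b' z' \<in> L" by simp
      qed
      have e1pt: "e1 = pt 1 0 0" by (simp add: pt_def)
      define A where "A x \<longleftrightarrow> (\<forall>a b. a^2 + b^2 + x^2 = 1 \<longrightarrow> reach G W' (pt a b x) e1)" for x
      define B where "B w \<longleftrightarrow> (\<forall>a b z. a^2 + b^2 + z^2 = 1 \<longrightarrow> c*z - s*b = w \<longrightarrow> reach G W' (pt a b z) e1)" for w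
      have A0: "A 0" unfolding A_def
      proof (intro allI impI)
        fix a b :: real assume "a^2 + b^2 + 0^2 = 1"
        then have "reach G W' (pt a b 0) (pt 1 0 0)" by (intro mv1) simp
        then show "reach G W' (pt a b 0) e1" using e1pt by simp
      qed
      have B0: "B 0" unfolding B_def
      proof (intro allI impI)
        fix a b z :: real assume "a^2 + b^2 + z^2 = 1" "c*z - s*b = 0"
        then have "reach G W' (pt a b z) (pt 1 0 0)" by (intro mv2) simp_all
        then show "reach G W' (pt a b z) e1" using e1pt by simp
      qed
      have AB: "A x" if Bw: "B w" and hx: "x^2 - 2*c*x*w + w^2 \<le> s^2" for x w
      proof -
        have aux: "x^2 + ((c*x - w)/s)^2 \<le> 1" by (rule coord_aux[OF cs s0 hx])
        define b' where "b' = (c*x - w)/s"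
        define a' where "a' = sqrt (1 - x^2 - b'^2)"
        have a'2: "a'^2 = 1 - x^2 - b'^2" using aux by (simp add: a'_def b'_def)
        have sb': "c*x - s*b' = w" using s0 by (simp add: b'_def)
        show "A x" unfolding A_def
        proof (intro allI impI)
          fix a b :: real assume ab: "a^2 + b^2 + x^2 = 1"
          have r1: "reach G W' (pt a b x) (pt a' b' x)" by (rule mv1) (use ab a'2 in simp)
          have r2: "reach G W' (pt a' b' x) e1" using Bw sb' a'2 unfolding B_def by simp
          show "reach G W' (pt a b x) e1" by (rule reach_trans[OF G r1 r2])
        qed
      qed
      have BA: "B w" if At: "A t" and ht: "t^2 - 2*c*t*w + w^2 \<le> s^2" for t w
      proof -
        have aux: "t^2 + ((c*t - w)/s)^2 \<le> 1" by (rule coord_aux[OF cs s0 ht])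
        define b' where "b' = (c*t - w)/s"
        define a' where "a' = sqrt (1 - t^2 - b'^2)"
        have a'2: "a'^2 = 1 - t^2 - b'^2" using aux by (simp add: a'_def b'_def)
        have sb': "c*t - s*b' = w" using s0 by (simp add: b'_def)
        show "B w" unfolding B_def
        proof (intro allI impI)
          fix a b z :: real assume abz: "a^2 + b^2 + z^2 = 1" and m: "c*z - s*b = w"
          have r1: "reach G W' (pt a b z) (pt a' b' t)" by (rule mv2) (use abz a'2 m sb' in simp_all)
          have r2: "reach G W' (pt a' b' t) e1" using At a'2 unfolding A_def by simp
          show "reach G W' (pt a b z) e1" by (rule reach_trans[OF G r1 r2])
        qed
      qed
      have ind: "\<forall>x. \<bar>x\<bar> \<le> 1 \<longrightarrow> c^n * \<bar>x\<bar> \<le> s \<longrightarrow> A x \<and> B x" for n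
      proof (induction n)
        case 0
        show ?case
        proof (intro allI impI)
          fix x :: real assume "\<bar>x\<bar> \<le> 1" "c^0 * \<bar>x\<bar> \<le> s"
          then have "\<bar>x\<bar> \<le> \<bar>s\<bar>" by simp
          then have x2: "x^2 \<le> s^2" by (simp only: abs_le_square_iff)
          have "A x" by (rule AB[OF B0]) (use x2 in simp)
          moreover have "B x" by (rule BA[OF A0]) (use x2 in simp)
          ultimately show "A x \<and> B x" ..
        qed
      next
        case (Suc n)
        show ?case
        proof (intro allI impI)
          fix x :: real assume x1: "\<bar>x\<bar> \<le> 1" and xs: "c^Suc n * \<bar>x\<bar> \<le> s"
          have "\<bar>c*x\<bar> = c * \<bar>x\<bar>" using c0 by (simp add: abs_mult)
          also have "\<dots> \<le> 1 * 1" using c0 c1 x1 by (intro mult_mono) simp_all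
          finally have cx1: "\<bar>c*x\<bar> \<le> 1" by simp
          have "c^n * \<bar>c*x\<bar> = c^Suc n * \<bar>x\<bar>" using c0 by (simp add: abs_mult)
          then have "c^n * \<bar>c*x\<bar> \<le> s" using xs by linarith
          then have IH: "A (c*x)" "B (c*x)" using Suc.IH cx1 by auto
          have "A x" by (rule AB[OF IH(2) step_alg(1)[OF cs x1]])
          moreover have "B x" by (rule BA[OF IH(1) step_alg(2)[OF cs x1]])
          ultimately show "A x \<and> B x" ..
        qed
      qed
      obtain n where cn: "c^n < s" using real_arch_pow_inv[OF s0 c1] by blast
      have opq: "orthogonal p q" using q[of p] p by (simp add: orthogonal_commute)
      have "1 = (norm h)^2" using nh by simp
      also have "\<dots> = (norm p)^2 + t^2" unfolding hpq t_def by (rule norm_add_Pythagorean[OF opq])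
      finally have pt2: "(norm p)^2 = 1 - t^2" by simp
      have t1: "t \<le> 1"
      proof -
        have "t^2 \<le> 1" using pt2 by (metis diff_ge_0_iff_ge zero_le_power2)
        then show ?thesis using abs_le_square_iff[of t 1] t0 by simp
      qed
      have "c^n * \<bar>t\<bar> \<le> c^n * 1" using t1 t0 c0 by (intro mult_left_mono) simp_all
      then have "c^n * \<bar>t\<bar> \<le> s" using cn by simp
      then have At: "A t" using ind[of n] t1 t0 by simp
      define a0 where "a0 = sqrt (1 - t^2)"
      have a02: "a0^2 = 1 - t^2" using pt2 unfolding a0_def by (metis real_sqrt_pow2 zero_le_power2)
      have r1: "reach G W' h (pt a0 0 t)"
      proof (rule goodW)
        have "norm (pt a0 0 t) = sqrt (a0^2 + 0^2 + t^2)" using ptn[of a0 0 t] by (simp add: norm_eq_sqrt_inner)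
        then show "norm h = norm (pt a0 0 t)" using nh a02 by simp
        have "h - pt a0 0 t = p - a0 *\<^sub>R e1" by (simp add: hpq qnn pt_def)
        then show "h - pt a0 0 t \<in> W" using pW e1W sW by (simp add: subspace_diff subspace_scale)
      qed
      have r2: "reach G W' (pt a0 0 t) e1" using At a02 unfolding A_def by simp
      show ?thesis by (rule reach_trans[OF G r1 r2])
    qed
  qed
  have C2: "reach G W' h (norm h *\<^sub>R e1)" if hW': "h \<in> W'" for h
  proof (cases "h = 0")
    case True
    then show ?thesis using reach_refl[OF G] by simp
  next
    case False
    have "h /\<^sub>R norm h \<in> W'" using hW' sW' by (simp add: subspace_scale)
    moreover have "norm (h /\<^sub>R norm h) = 1" using False by simp
    ultimately have r: "reach G W' (h /\<^sub>R norm h) e1" by (rule C1)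
    have z: "0 \<in> orthogonal_comp W'" by (simp add: orthogonal_comp_def orthogonal_def)
    have "reach G W' (norm h *\<^sub>R (h /\<^sub>R norm h) + 0) (norm h *\<^sub>R e1 + 0)"
      by (rule reach_lin[OF r z])
    then show ?thesis using False by simp
  qed
  show ?thesis unfolding good_def W'_def[symmetric]
  proof (intro allI impI)
    fix y y' :: "real^'n"
    assume ny: "norm y = norm y'" and dy: "y - y' \<in> W'"
    obtain h g where h: "h \<in> span (W \<union> L)" and g: "\<And>w. w \<in> span (W \<union> L) \<Longrightarrow> orthogonal g w" and yhg: "y = h + g"
      using orthogonal_subspace_decomp_exists[of "W \<union> L" y] by blast
    have hW': "h \<in> W'" using h by (simp add: W'_def)
    have gp: "g \<in> orthogonal_comp W'" using g unfolding orthogonal_comp_def W'_def by (simp add: orthogonal_commute)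
    define h' where "h' = y' - g"
    have h'W': "h' \<in> W'"
    proof -
      have "h' = h - (y - y')" by (simp add: h'_def yhg)
      then show ?thesis using hW' dy sW' by (simp add: subspace_diff)
    qed
    have y'hg: "y' = h' + g" by (simp add: h'_def)
    have o1: "orthogonal h g" using g[OF h] by (simp add: orthogonal_commute)
    have "h' \<in> span (W \<union> L)" using h'W' by (simp add: W'_def)
    then have o2: "orthogonal h' g" using g orthogonal_commute by blast
    have "(norm h)^2 + (norm g)^2 = (norm h')^2 + (norm g)^2"
      using norm_add_Pythagorean[OF o1] norm_add_Pythagorean[OF o2] ny yhg y'hg by simp
    then have "(norm h)^2 = (norm h')^2" by simp
    then have nh: "norm h = norm h'" by (simp add: power2_eq_iff_nonneg)
    have r1: "reach G W' (1 *\<^sub>R h + g) (1 *\<^sub>R (norm h *\<^sub>R e1) + g)"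
      by (rule reach_lin[OF C2[OF hW'] gp])
    have r2: "reach G W' (1 *\<^sub>R h' + g) (1 *\<^sub>R (norm h' *\<^sub>R e1) + g)"
      by (rule reach_lin[OF C2[OF h'W'] gp])
    have r1': "reach G W' y (norm h *\<^sub>R e1 + g)" using r1 yhg by simp
    have r2': "reach G W' (norm h *\<^sub>R e1 + g) y'" using reach_sym[OF G r2] y'hg nh by simp
    show "reach G W' y y'" by (rule reach_trans[OF G r1' r2'])
  qed
qed

lemma nonfull_perp:
  fixes S :: "(real^'n) set"
  assumes "span S \<noteq> UNIV"
  obtains w where "w \<noteq> 0" "\<And>y. y \<in> span S \<Longrightarrow> orthogonal w y"
proof -
  have "dim S \<noteq> DIM(real^'n)" using assms dim_eq_full by metis
  then have "dim S < DIM(real^'n)" using dim_subset_UNIV[of S] by linarith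
  then show thesis using orthogonal_to_subspace_exists that by metis
qed

lemma span_Un_span_left: "span (span A \<union> B) = span (A \<union> B)"
proof
  show "span (A \<union> B) \<subseteq> span (span A \<union> B)" by (intro span_mono) (use span_superset in auto)
  have "span A \<union> B \<subseteq> span (A \<union> B)" using span_mono[of A "A \<union> B"] span_superset[of "A \<union> B"] by auto
  then have "span (span A \<union> B) \<subseteq> span (span (A \<union> B))" by (rule span_mono)
  then show "span (span A \<union> B) \<subseteq> span (A \<union> B)" by (simp add: span_span)
qed

theorem proposition1p5:
  fixes L :: "nat \<Rightarrow> (real^'n) set" and k :: nat
  assumes "CARD('n) \<ge> 2"
    and "\<And>i. i \<in> {1..k} \<Longrightarrow> subspace (L i)"
    and "\<And>i. i \<in> {1..k} \<Longrightarrow> dim (L i) \<ge> 2"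
    and "\<And>i j. i \<in> {1..k} \<Longrightarrow> j \<in> {1..k} \<Longrightarrow> L i \<inter> L j \<noteq> {0}"
  shows "(transitive_on_sphere
            (generated_subgroup (\<Union>i\<in>{1..k}. fixing_group (orthogonal_comp (L i))))
          \<longleftrightarrow> span (\<Union>i\<in>{1..k}. L i) = UNIV)
       \<and> (span (\<Union>i\<in>{1..k}. L i) = UNIV
          \<longleftrightarrow> (\<Inter>i\<in>{1..k}. orthogonal_comp (L i)) = {0})"
proof -
  define GS where "GS = (\<Union>i\<in>{1..k}. fixing_group (orthogonal_comp (L i)))"
  define G where "G = generated_subgroup GS"
  have GSO: "GS \<subseteq> SO" unfolding GS_def fixing_group_def by blast
  have grp: "isgrp G" unfolding G_def by (rule gen_isgrp[OF GSO])
  have genL: "fixing_group (orthogonal_comp (L i)) \<subseteq> G" if "i \<in> {1..k}" for i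
    using gen_base[of GS] that unfolding G_def GS_def by blast
  define S where "S = (\<Union>i\<in>{1..k}. L i)"
  have perpL: "w \<in> orthogonal_comp (L i)" if "i \<in> {1..k}" "\<And>y. y \<in> span S \<Longrightarrow> orthogonal w y" for w i
  proof -
    have "orthogonal y w" if "y \<in> L i" for y
    proof -
      have "y \<in> S" using \<open>i \<in> {1..k}\<close> that unfolding S_def by blast
      then have "y \<in> span S" by (rule span_base)
      then show ?thesis using \<open>\<And>y. y \<in> span S \<Longrightarrow> orthogonal w y\<close> orthogonal_commute by blast
    qed
    then show ?thesis unfolding orthogonal_comp_def by blast
  qed
  have part2: "span S = UNIV \<longleftrightarrow> (\<Inter>i\<in>{1..k}. orthogonal_comp (L i)) = {0}"
  proof
    assume sp: "span S = UNIV"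
    show "(\<Inter>i\<in>{1..k}. orthogonal_comp (L i)) = {0}"
    proof (rule set_eqI, rule iffI)
      fix x assume x: "x \<in> (\<Inter>i\<in>{1..k}. orthogonal_comp (L i))"
      have "orthogonal x y" if yS: "y \<in> S" for y
      proof -
        obtain i where i: "i \<in> {1..k}" "y \<in> L i" using yS unfolding S_def by blast
        have "x \<in> orthogonal_comp (L i)" using x i(1) by blast
        then have "orthogonal y x" using i(2) unfolding orthogonal_comp_def by blast
        then show ?thesis by (simp add: orthogonal_commute)
      qed
      then have "orthogonal x x" using orthogonal_to_span[of x S x] sp by auto
      then show "x \<in> {0}" by (simp add: orthogonal_self)
    next
      fix x assume "x \<in> {0::real^'n}"
      then show "x \<in> (\<Inter>i\<in>{1..k}. orthogonal_comp (L i))"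
        by (simp add: orthogonal_comp_def orthogonal_def)
    qed
  next
    assume I: "(\<Inter>i\<in>{1..k}. orthogonal_comp (L i)) = {0}"
    show "span S = UNIV"
    proof (rule ccontr)
      assume "span S \<noteq> UNIV"
      then obtain w where w0: "w \<noteq> 0" and w: "\<And>y. y \<in> span S \<Longrightarrow> orthogonal w y"
        using nonfull_perp by blast
      have "w \<in> (\<Inter>i\<in>{1..k}. orthogonal_comp (L i))" using perpL w by blast
      then show False using I w0 by blast
    qed
  qed
  have part1a: "span S = UNIV" if tr: "transitive_on_sphere G"
  proof (rule ccontr)
    assume "span S \<noteq> UNIV"
    then obtain w where w0: "w \<noteq> 0" and w: "\<And>y. y \<in> span S \<Longrightarrow> orthogonal w y"
      using nonfull_perp by blast
    define w1 where "w1 = w /\<^sub>R norm w"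
    have nw1: "norm w1 = 1" using w0 by (simp add: w1_def)
    have w1L: "w1 \<in> orthogonal_comp (L i)" if "i \<in> {1..k}" for i
    proof -
      have "w \<in> orthogonal_comp (L i)" using perpL[OF that] w by blast
      then show ?thesis unfolding w1_def using subspace_scale[OF subspace_orthogonal_comp[of "L i"]] by blast
    qed
    define H where "H = {U \<in> SO. U *v w1 = w1}"
    have "isgrp H" unfolding isgrp_def
    proof (intro conjI ballI)
      show "H \<subseteq> SO" unfolding H_def by blast
      show "mat 1 \<in> H" unfolding H_def using SO_id by simp
      fix X assume X: "X \<in> H"
      then have oX: "orthogonal_matrix X" and Xw: "X *v w1 = w1" unfolding H_def SO_def by auto
      have "matrix_inv X *v w1 = w1"
        using orth_tr_mv[OF oX, of w1] Xw orth_matrix_inv[OF oX] by simp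
      then show "matrix_inv X \<in> H" using X SO_inv unfolding H_def by blast
      fix Y assume Y: "Y \<in> H"
      then show "X ** Y \<in> H" using X SO_mul unfolding H_def
        by (auto simp: matrix_vector_mul_assoc[symmetric])
    qed
    moreover have "GS \<subseteq> H" unfolding GS_def H_def fixing_group_def using w1L by blast
    ultimately have GH: "G \<subseteq> H" unfolding G_def by (rule gen_least)
    have "norm (- w1) = 1" using nw1 by simp
    then obtain U where "U \<in> G" "U *v w1 = - w1" using tr nw1 unfolding transitive_on_sphere_def by blast
    then have "w1 = - w1" using GH unfolding H_def by auto
    then have "w1 + w1 = 0" by (metis add.right_inverse)
    then have "(2::real) *\<^sub>R w1 = 0" by (simp add: scaleR_2)
    then have "w1 = 0" by simp
    then show False using nw1 by simp
  qed
  have part1b: "transitive_on_sphere G" if sp: "span S = UNIV"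
  proof -
    have k1: "k \<ge> 1"
    proof (rule ccontr)
      assume "\<not> k \<ge> 1"
      then have "S = {}" unfolding S_def by auto
      then have "span S = {0}" by simp
      then show False using sp by (metis axis_eq_0_iff UNIV_I singletonD zero_neq_one)
    qed
    have gd: "good G (span (\<Union>i\<in>{1..m}. L i))" if "1 \<le> m" "m \<le> k" for m
      using that
    proof (induction m)
      case 0
      then show ?case by simp
    next
      case (Suc m)
      show ?case
      proof (cases "m = 0")
        case True
        have sL1: "subspace (L 1)" using assms(2) k1 by simp
        have "span (\<Union>i\<in>{1..Suc m}. L i) = L 1" using True sL1 by (simp add: span_eq_iff)
        moreover have "good G (L 1)"
          by (rule good_base) (use sL1 assms(3) k1 genL in auto)
        ultimately show ?thesis by simp
      next
        case False
        define Wm where "Wm = span (\<Union>i\<in>{1..m}. L i)"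
        have IH: "good G Wm" using Suc False unfolding Wm_def by simp
        have m1: "Suc m \<in> {1..k}" using Suc.prems by simp
        have one: "1 \<in> {1..k}" using k1 by simp
        have eq: "span (\<Union>i\<in>{1..Suc m}. L i) = span (Wm \<union> L (Suc m))"
        proof -
          have "(\<Union>i\<in>{1..Suc m}. L i) = (\<Union>i\<in>{1..m}. L i) \<union> L (Suc m)"
            by (auto simp: atLeastAtMostSuc_conv)
          then show ?thesis unfolding Wm_def by (simp add: span_Un_span_left)
        qed
        obtain e where eL1: "e \<in> L 1" and eLm: "e \<in> L (Suc m)" and e0: "e \<noteq> 0"
        proof -
          have "L 1 \<inter> L (Suc m) \<noteq> {0}" using assms(4)[OF one m1] .
          moreover have "0 \<in> L 1 \<inter> L (Suc m)" using assms(2)[OF one] assms(2)[OF m1] by (simp add: subspace_0)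
          ultimately obtain e where "e \<in> L 1 \<inter> L (Suc m)" "e \<noteq> 0" by blast
          then show thesis using that by blast
        qed
        have L1W: "L 1 \<subseteq> Wm" unfolding Wm_def using False span_superset by fastforce
        have dW: "dim Wm \<ge> 2" using dim_subset[OF L1W] assms(3)[OF one] by simp
        have "good G (span (Wm \<union> L (Suc m)))"
        proof (rule good_step[OF grp _ assms(2)[OF m1] IH _ _ _ e0 dW])
          show "subspace Wm" unfolding Wm_def by (rule subspace_span)
          show "good G (L (Suc m))" by (rule good_base) (use assms(2,3) m1 genL in auto)
          show "e \<in> Wm" using L1W eL1 by blast
          show "e \<in> L (Suc m)" by (rule eLm)
        qed
        then show ?thesis using eq by simp
      qed
    qed
    have "good G UNIV" using gd[OF k1 order_refl] sp unfolding S_def by simp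
    then show ?thesis unfolding transitive_on_sphere_def good_def reach_def by auto
  qed
  show ?thesis
    using part1a part1b part2 unfolding G_def GS_def S_def by blast
qed

end
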